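(* Let $A,B,C$ be finite nonempty subsets of $\mathbb R$, let $f:\mathbb R\to\mathbb R$ be strictly convex, and suppose $|A+B|\le M|B|$. Then for every $\tau>0$, $$|\{x\in f(A)+C: (f(A)*C)(x)\ge\tau\}|\le c\,(M\log(2M))^2\frac{|B||C|^2}{\tau^3},$$ where $c>0$ is an absolute constant.
   Context: $f(A)=\{f(a):a\in A\}$; $(f(A)*C)(x)=|\{(u,v)\in f(A)\times C: u+v=x\}|$. Logarithms are to base 2. *)

theory Defs
  imports "HOL-Analysis.Analysis"
begin

definition strictly_convex :: "(real \<Rightarrow> real) \<Rightarrow> bool" where
  "strictly_convex f \<longleftrightarrow>
     (\<forall>x y t. x \<noteq> y \<and> 0 < t \<and> t < 1 \<longrightarrow>
        f ((1 - t) * x + t * y) < (1 - t) * f x + t * f y)"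

definition sumset :: "real set \<Rightarrow> real set \<Rightarrow> real set" where
  "sumset A B = {a + b | a b. a \<in> A \<and> b \<in> B}"

definition rep :: "real set \<Rightarrow> real set \<Rightarrow> real \<Rightarrow> nat" where
  "rep A C x = card {(u, v). u \<in> A \<and> v \<in> C \<and> u + v = x}"

end

theory Submission
  imports Defs
begin

lemma sc3:
  assumes sc: "strictly_convex f" and pq: "p < q" and qr: "q < (r::real)"
  shows "f q * (r - p) < (r - q) * f p + (q - p) * f r"
proof -
  define t where "t = (q - p) / (r - p)"
  have rp: "r - p > 0" using pq qr by simp
  have t0: "0 < t" and t1: "t < 1" using pq qr rp by (auto simp: t_def field_simps)
  have tr: "t * (r - p) = q - p" using rp by (simp add: t_def)
  have eq: "(1 - t) * p + t * r = q"
  proof -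
    have "(1 - t) * p + t * r = p + t * (r - p)" by (simp add: algebra_simps)
    thus ?thesis using tr by simp
  qed
  have "f ((1 - t) * p + t * r) < (1 - t) * f p + t * f r"
    using sc t0 t1 pq qr unfolding strictly_convex_def by auto
  hence "f q < (1 - t) * f p + t * f r" using eq by simp
  hence "f q * (r - p) < ((1 - t) * f p + t * f r) * (r - p)"
    using rp by (simp add: mult_strict_right_mono)
  also have "((1 - t) * f p + t * f r) * (r - p) = ((r - p) - t * (r - p)) * f p + (t * (r - p)) * f r"
    by (simp add: algebra_simps)
  also have "\<dots> = (r - q) * f p + (q - p) * f r" using tr by simp
  finally show ?thesis .
qed

lemma sc_incr:
  assumes sc: "strictly_convex f" and d: "0 < (\<delta>::real)" and yz: "y < z"
  shows "f (y + \<delta>) - f y < f (z + \<delta>) - f z"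
proof -
  have 1: "f (y + \<delta>) * (z + \<delta> - y) < (z + \<delta> - (y + \<delta>)) * f y + (y + \<delta> - y) * f (z + \<delta>)"
    using sc3[OF sc, of y "y + \<delta>" "z + \<delta>"] d yz by simp
  have 2: "f z * (z + \<delta> - y) < (z + \<delta> - z) * f y + (z - y) * f (z + \<delta>)"
    using sc3[OF sc, of y z "z + \<delta>"] d yz by simp
  have "(f (y + \<delta>) + f z) * (z + \<delta> - y) < (f y + f (z + \<delta>)) * (z + \<delta> - y)"
    using 1 2 by (simp add: algebra_simps)
  hence "f (y + \<delta>) + f z < f y + f (z + \<delta>)"
    using d yz by (simp add: mult_less_cancel_right)
  thus ?thesis by simp
qed

definition rk :: "real set \<Rightarrow> real \<Rightarrow> nat" where
  "rk X s = card {y \<in> X. y < s}"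

lemma rk_less:
  assumes "finite X" "s \<in> X" "s < s'"
  shows "rk X s < rk X s'"
proof -
  have "{y \<in> X. y < s} \<subset> {y \<in> X. y < s'}" using assms by auto
  thus ?thesis unfolding rk_def using assms by (simp add: psubset_card_mono)
qed

lemma rk_lt_card:
  assumes "finite X" "s \<in> X"
  shows "rk X s < card X"
proof -
  have "{y \<in> X. y < s} \<subset> X" using assms by auto
  thus ?thesis unfolding rk_def using assms by (simp add: psubset_card_mono)
qed

lemma rk_inj:
  assumes "finite X"
  shows "inj_on (rk X) X"
proof (rule inj_onI)
  fix s s' assume "s \<in> X" "s' \<in> X" "rk X s = rk X s'"
  thus "s = s'" using rk_less[OF assms, of s s'] rk_less[OF assms, of s' s]
    by (metis less_irrefl linorder_neqE_linordered_idom)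
qed

lemma card_gap:
  assumes "finite Y" "inj_on g Y" "\<forall>y\<in>Y. 1 \<le> g y \<and> real (g y) * n < D" "(n::real) > 0" "D > 0"
  shows "real (card Y) \<le> D / n"
proof -
  have "g ` Y \<subseteq> {1..nat \<lfloor>D / n\<rfloor>}"
  proof
    fix j assume "j \<in> g ` Y"
    then obtain y where y: "y \<in> Y" "j = g y" by auto
    have "real j * n < D" using assms(3) y by auto
    hence "real j < D / n" using assms(4) by (simp add: pos_less_divide_eq)
    hence "of_int (int j) \<le> D / n" by simp
    hence "int j \<le> \<lfloor>D / n\<rfloor>" by (simp only: le_floor_iff)
    hence "j \<le> nat \<lfloor>D / n\<rfloor>" by simp
    moreover have "1 \<le> j" using assms(3) y by auto
    ultimately show "j \<in> {1..nat \<lfloor>D / n\<rfloor>}" by simp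
  qed
  hence "card (g ` Y) \<le> card {1..nat \<lfloor>D / n\<rfloor>}" by (intro card_mono) auto
  hence "card Y \<le> nat \<lfloor>D / n\<rfloor>" using card_image[OF assms(2)] by simp
  moreover have "real (nat \<lfloor>D / n\<rfloor>) \<le> D / n" using assms(4,5) by simp
  ultimately show ?thesis by linarith
qed

lemma block:
  fixes R :: "real set" and \<phi> :: "real \<Rightarrow> real"
  assumes fR: "finite R" and rng: "\<forall>a\<in>R. 0 \<le> \<phi> a \<and> \<phi> a < N"
    and mono: "\<forall>a\<in>R. \<forall>a'\<in>R. a < a' \<longrightarrow> \<phi> a < \<phi> a'" and D: "D > 0" and N: "N \<ge> 0"
  shows "real (card R) \<le> real (card {(a, a'). a \<in> R \<and> a' \<in> R \<and> a < a' \<and> \<phi> a' < \<phi> a + D}) + N / D + 1"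
proof -
  define P where "P = {(a, a'). a \<in> R \<and> a' \<in> R \<and> a < a' \<and> \<phi> a' < \<phi> a + D}"
  define R' where "R' = {a \<in> R. \<forall>a'\<in>R. a < a' \<longrightarrow> \<phi> a + D \<le> \<phi> a'}"
  have fP: "finite P"
    by (rule finite_subset[of _ "R \<times> R"]) (auto simp: fR P_def)
  have "R - R' \<subseteq> fst ` P" unfolding R'_def P_def by force
  hence c1: "card (R - R') \<le> card P" using fP
    by (meson card_image_le card_mono finite_imageI le_trans)
  have inj: "inj_on (\<lambda>a. \<lfloor>\<phi> a / D\<rfloor>) R'"
  proof (rule inj_onI)
    fix a b assume ab: "a \<in> R'" "b \<in> R'" "\<lfloor>\<phi> a / D\<rfloor> = \<lfloor>\<phi> b / D\<rfloor>"
    show "a = b"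
    proof (rule ccontr)
      assume "a \<noteq> b"
      then consider "a < b" | "b < a" by linarith
      thus False
      proof cases
        case 1
        hence "\<phi> a + D \<le> \<phi> b" using ab unfolding R'_def by auto
        hence "(\<phi> a + D) / D \<le> \<phi> b / D" using D by (simp add: divide_right_mono)
        hence "\<phi> a / D + 1 \<le> \<phi> b / D" using D by (simp add: add_divide_distrib)
        thus False using ab(3) by linarith
      next
        case 2
        hence "\<phi> b + D \<le> \<phi> a" using ab unfolding R'_def by auto
        hence "(\<phi> b + D) / D \<le> \<phi> a / D" using D by (simp add: divide_right_mono)
        hence "\<phi> b / D + 1 \<le> \<phi> a / D" using D by (simp add: add_divide_distrib)
        thus False using ab(3) by linarith
      qed
    qed
  qed
  have "(\<lambda>a. \<lfloor>\<phi> a / D\<rfloor>) ` R' \<subseteq> {0..\<lfloor>N / D\<rfloor>}"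
  proof
    fix k assume "k \<in> (\<lambda>a. \<lfloor>\<phi> a / D\<rfloor>) ` R'"
    then obtain a where a: "a \<in> R" "k = \<lfloor>\<phi> a / D\<rfloor>" unfolding R'_def by auto
    have "0 \<le> \<phi> a / D" "\<phi> a / D \<le> N / D" using rng a D by (auto simp: divide_right_mono less_imp_le)
    thus "k \<in> {0..\<lfloor>N / D\<rfloor>}" using a by (auto intro: floor_mono)
  qed
  hence "card ((\<lambda>a. \<lfloor>\<phi> a / D\<rfloor>) ` R') \<le> card {0..\<lfloor>N / D\<rfloor>}"
    by (intro card_mono) auto
  hence c2: "card R' \<le> nat (\<lfloor>N / D\<rfloor> + 1)" using card_image[OF inj] by simp
  have "real (nat (\<lfloor>N / D\<rfloor> + 1)) \<le> N / D + 1" using N D by simp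
  have sub: "R' \<subseteq> R" unfolding R'_def by auto
  have "card (R - R') = card R - card R'" using fR sub by (meson card_Diff_subset finite_subset)
  moreover have "card R' \<le> card R" using fR sub by (simp add: card_mono)
  ultimately have "card R = card (R - R') + card R'" by arith
  hence "real (card R) \<le> real (card P) + real (nat (\<lfloor>N / D\<rfloor> + 1))" using c1 c2 by linarith
  thus ?thesis using \<open>real (nat (\<lfloor>N / D\<rfloor> + 1)) \<le> N / D + 1\<close> unfolding P_def by linarith
qed

lemma sumset_eq: "sumset A B = (\<lambda>(a, b). a + b) ` (A \<times> B)"
  unfolding sumset_def by auto

lemma finite_sumset: "finite A \<Longrightarrow> finite B \<Longrightarrow> finite (sumset A B)"
  unfolding sumset_eq by simp

lemma main_inc:
  fixes A B C :: "real set" and f :: "real \<Rightarrow> real" and \<tau> :: real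
  assumes fA: "finite A" and fB: "finite B" and Bne: "B \<noteq> {}" and fC: "finite C"
    and sc: "strictly_convex f" and mono: "\<forall>a\<in>A. \<forall>a'\<in>A. a < a' \<longrightarrow> f a < f a'"
    and t4: "4 \<le> \<tau>"
  shows "real (card {x \<in> sumset (f ` A) C. \<tau> \<le> real (rep (f ` A) C x)}) * real (card B) * \<tau>^3
         \<le> 128 * real (card (sumset A B))^2 * real (card C)^2"
proof -
  define E where "E = {x \<in> sumset (f ` A) C. \<tau> \<le> real (rep (f ` A) C x)}"
  define S where "S = sumset A B"
  define m where "m = card S"
  define nC where "nC = card C"
  have fS: "finite S" unfolding S_def using fA fB by (simp add: finite_sumset)
  have fE: "finite E" unfolding E_def using fA fC by (simp add: finite_sumset)
  show ?thesis
  proof (cases "E = {}")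
    case True
    then show ?thesis unfolding E_def[symmetric] by simp
  next
    case False
    then obtain x0 where "x0 \<in> E" by auto
    then obtain a0 c0 where a0: "a0 \<in> A" and c0: "c0 \<in> C"
      unfolding E_def sumset_def by auto
    obtain b0 where b0: "b0 \<in> B" using Bne by auto
    have "a0 + b0 \<in> S" unfolding S_def sumset_def using a0 b0 by auto
    hence mpos: "m > 0" unfolding m_def using fS card_gt_0_iff by blast
    have nCpos: "nC > 0" unfolding nC_def using fC c0 card_gt_0_iff by blast
    have injf: "inj_on f A"
    proof (rule inj_onI)
      fix a a' assume "a \<in> A" "a' \<in> A" "f a = f a'"
      thus "a = a'" using mono by (metis less_irrefl linorder_neqE_linordered_idom)
    qed
    define R where "R x = {a \<in> A. x - f a \<in> C}" for x
    have fR: "finite (R x)" for x unfolding R_def using fA by simp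
    have rep_eq: "rep (f ` A) C x = card (R x)" for x
    proof -
      have "{(u, v). u \<in> f ` A \<and> v \<in> C \<and> u + v = x} = (\<lambda>a. (f a, x - f a)) ` R x"
        unfolding R_def by force
      moreover have "inj_on (\<lambda>a. (f a, x - f a)) (R x)"
        using injf unfolding R_def inj_on_def by auto
      ultimately show ?thesis unfolding rep_def by (simp add: card_image)
    qed
    define D where "D = 8 * real m * real nC / \<tau>"
    have Dpos: "D > 0" unfolding D_def using mpos nCpos t4 by simp
    define \<phi> where "\<phi> x b a = real (rk S (a + b)) * real nC + (real nC - real (rk C (x - f a))) * real m"
      for x b a
    define P where "P x b = {(a, a'). a \<in> R x \<and> a' \<in> R x \<and> a < a' \<and> \<phi> x b a' < \<phi> x b a + D}"
      for x b
    have lower: "\<tau> / 2 \<le> real (card (P x b))" if x: "x \<in> E" and b: "b \<in> B" for x b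
    proof -
      have rng: "\<forall>a\<in>R x. 0 \<le> \<phi> x b a \<and> \<phi> x b a < 2 * real m * real nC"
      proof
        fix a assume a: "a \<in> R x"
        have "a + b \<in> S" unfolding S_def sumset_def using a b unfolding R_def by auto
        hence r1: "real (rk S (a + b)) + 1 \<le> real m" using rk_lt_card[OF fS] unfolding m_def
          by (metis of_nat_add of_nat_le_iff of_nat_1 Suc_eq_plus1 Suc_leI)
        have "x - f a \<in> C" using a unfolding R_def by auto
        hence r2: "real (rk C (x - f a)) + 1 \<le> real nC" using rk_lt_card[OF fC] unfolding nC_def
          by (metis of_nat_add of_nat_le_iff of_nat_1 Suc_eq_plus1 Suc_leI)
        have t1: "real (rk S (a + b)) * real nC \<le> (real m - 1) * real nC"
          using r1 by (intro mult_right_mono) auto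
        have t2: "(real nC - real (rk C (x - f a))) * real m \<le> real nC * real m"
          by (intro mult_right_mono) auto
        have t3: "0 \<le> (real nC - real (rk C (x - f a))) * real m" using r2 by simp
        have t0: "0 \<le> real (rk S (a + b)) * real nC" by simp
        have t5: "(real m - 1) * real nC + real nC * real m < 2 * real m * real nC"
          using nCpos by (simp add: algebra_simps)
        show "0 \<le> \<phi> x b a \<and> \<phi> x b a < 2 * real m * real nC"
          using t0 t1 t2 t3 t5 unfolding \<phi>_def by linarith
      qed
      have mon: "\<forall>a\<in>R x. \<forall>a'\<in>R x. a < a' \<longrightarrow> \<phi> x b a < \<phi> x b a'"
      proof (intro ballI impI)
        fix a a' assume a: "a \<in> R x" and a': "a' \<in> R x" and lt: "a < a'"
        have "a + b \<in> S" "a' + b \<in> S" unfolding S_def sumset_def using a a' b unfolding R_def by auto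
        hence "rk S (a + b) < rk S (a' + b)" using rk_less[OF fS] lt by simp
        hence 1: "real (rk S (a + b)) * real nC < real (rk S (a' + b)) * real nC"
          using nCpos by simp
        have "f a < f a'" using mono a a' lt unfolding R_def by auto
        hence "rk C (x - f a') < rk C (x - f a)" using rk_less[OF fC, of "x - f a'" "x - f a"] a'
          unfolding R_def by auto
        hence "real nC - real (rk C (x - f a)) \<le> real nC - real (rk C (x - f a'))" by simp
        hence 2: "(real nC - real (rk C (x - f a))) * real m \<le> (real nC - real (rk C (x - f a'))) * real m"
          by (intro mult_right_mono) auto
        show "\<phi> x b a < \<phi> x b a'" unfolding \<phi>_def using 1 2 by linarith
      qed
      have "real (card (R x)) \<le> real (card (P x b)) + 2 * real m * real nC / D + 1"
        using block[OF fR rng mon Dpos] unfolding P_def by simp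
      moreover have "2 * real m * real nC / D = \<tau> / 4"
        unfolding D_def using mpos nCpos t4 by (simp add: field_simps)
      moreover have "\<tau> \<le> real (card (R x))" using x unfolding E_def rep_eq by simp
      ultimately show ?thesis using t4 by linarith
    qed
    define Q where "Q = (SIGMA x:E. SIGMA b:B. P x b)"
    have fP: "finite (P x b)" for x b
      by (rule finite_subset[of _ "R x \<times> R x"]) (auto simp: fR P_def)
    have cardQ: "card Q = (\<Sum>x\<in>E. \<Sum>b\<in>B. card (P x b))"
      unfolding Q_def using fE fB fP by (simp add: finite_SigmaI)
    have "(\<Sum>x\<in>E. \<Sum>b\<in>B. \<tau> / 2) \<le> (\<Sum>x\<in>E. \<Sum>b\<in>B. real (card (P x b)))"
      using lower by (intro sum_mono) auto
    hence lowQ: "real (card E) * real (card B) * (\<tau> / 2) \<le> real (card Q)"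
      unfolding cardQ by (simp add: of_nat_sum)
    define h where "h = (\<lambda>(x::real, b::real, a::real, a'::real). (a + b, a' + b, x - f a, x - f a'))"
    define T where "T = {(s, s', c, c'). s \<in> S \<and> s' \<in> S \<and> c \<in> C \<and> c' \<in> C \<and> s < s' \<and> c' < c \<and>
       (real (rk S s') - real (rk S s)) * real nC < D \<and> (real (rk C c) - real (rk C c')) * real m < D}"
    have hQT: "h ` Q \<subseteq> T"
    proof
      fix y assume "y \<in> h ` Q"
      then obtain x b a a' where xb: "x \<in> E" "b \<in> B" and aa: "(a, a') \<in> P x b" and y: "y = h (x, b, a, a')"
        unfolding Q_def by auto
      have a: "a \<in> A" "x - f a \<in> C" and a': "a' \<in> A" "x - f a' \<in> C" and lt: "a < a'"
        and ph: "\<phi> x b a' < \<phi> x b a + D"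
        using aa unfolding P_def R_def by auto
      have S1: "a + b \<in> S" "a' + b \<in> S" unfolding S_def sumset_def using a a' xb by auto
      have "rk S (a + b) < rk S (a' + b)" using rk_less[OF fS] lt S1 by simp
      hence i1: "0 < real (rk S (a' + b)) - real (rk S (a + b))" by simp
      have "f a < f a'" using mono a a' lt by auto
      hence "rk C (x - f a') < rk C (x - f a)" using rk_less[OF fC, of "x - f a'" "x - f a"] a' by auto
      hence i2: "0 < real (rk C (x - f a)) - real (rk C (x - f a'))" by simp
      have p1: "0 \<le> (real (rk S (a' + b)) - real (rk S (a + b))) * real nC" using i1 by simp
      have p2: "0 \<le> (real (rk C (x - f a)) - real (rk C (x - f a'))) * real m" using i2 by simp
      have "\<phi> x b a' - \<phi> x b a = (real (rk S (a' + b)) - real (rk S (a + b))) * real nC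
             + (real (rk C (x - f a)) - real (rk C (x - f a'))) * real m"
        unfolding \<phi>_def by (simp add: algebra_simps)
      hence "(real (rk S (a' + b)) - real (rk S (a + b))) * real nC
             + (real (rk C (x - f a)) - real (rk C (x - f a'))) * real m < D" using ph by linarith
      hence "(real (rk S (a' + b)) - real (rk S (a + b))) * real nC < D"
        "(real (rk C (x - f a)) - real (rk C (x - f a'))) * real m < D" using p1 p2 by linarith+
      moreover have "x - f a' < x - f a" using \<open>f a < f a'\<close> by simp
      ultimately show "y \<in> T" unfolding y h_def T_def using S1 a a' lt by auto
    qed
    have injh: "inj_on h Q"
    proof (rule inj_onI)
      fix p q assume p: "p \<in> Q" and q: "q \<in> Q" and hpq: "h p = h q"
      obtain x1 b1 a1 a1' where p': "p = (x1, b1, a1, a1')" by (cases p) auto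
      obtain x2 b2 a2 a2' where q': "q = (x2, b2, a2, a2')" by (cases q) auto
      have l1: "a1 < a1'" using p unfolding p' Q_def P_def by auto
      have e1: "a1 + b1 = a2 + b2" and e2: "a1' + b1 = a2' + b2" and e3: "x1 - f a1 = x2 - f a2"
        and e4: "x1 - f a1' = x2 - f a2'" using hpq unfolding p' q' h_def by auto
      have de: "f a1' - f a1 = f a2' - f a2" using e3 e4 by linarith
      have bb: "b1 = b2"
      proof (rule ccontr)
        assume "b1 \<noteq> b2"
        then consider "b1 < b2" | "b2 < b1" by linarith
        thus False
        proof cases
          case 1
          have "f (a2 + (a1' - a1)) - f a2 < f (a1 + (a1' - a1)) - f a1"
            using sc_incr[OF sc, of "a1' - a1" a2 a1] l1 1 e1 by linarith
          moreover have "a2 + (a1' - a1) = a2'" using e1 e2 by linarith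
          ultimately show False using de by simp
        next
          case 2
          have "f (a1 + (a1' - a1)) - f a1 < f (a2 + (a1' - a1)) - f a2"
            using sc_incr[OF sc, of "a1' - a1" a1 a2] l1 2 e1 by linarith
          moreover have "a2 + (a1' - a1) = a2'" using e1 e2 by linarith
          ultimately show False using de by simp
        qed
      qed
      hence "a1 = a2" "a1' = a2'" "x1 = x2" using e1 e2 e3 by auto
      thus "p = q" unfolding p' q' using bb by simp
    qed
    define NS where "NS s = {s' \<in> S. s < s' \<and> (real (rk S s') - real (rk S s)) * real nC < D}" for s
    define NCc where "NCc c = {c' \<in> C. c' < c \<and> (real (rk C c) - real (rk C c')) * real m < D}" for c
    have cNS: "real (card (NS s)) \<le> D / real nC" if s: "s \<in> S" for s
    proof (rule card_gap[where g = "\<lambda>s'. rk S s' - rk S s"])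
      show "finite (NS s)" unfolding NS_def using fS by simp
      show "inj_on (\<lambda>s'. rk S s' - rk S s) (NS s)"
      proof (rule inj_onI)
        fix u v assume "u \<in> NS s" "v \<in> NS s" "rk S u - rk S s = rk S v - rk S s"
        moreover have "rk S s < rk S u" "rk S s < rk S v" using calculation rk_less[OF fS s] unfolding NS_def by auto
        ultimately have "rk S u = rk S v" by arith
        thus "u = v" using rk_inj[OF fS] \<open>u \<in> NS s\<close> \<open>v \<in> NS s\<close> unfolding NS_def inj_on_def by auto
      qed
      show "\<forall>y\<in>NS s. 1 \<le> rk S y - rk S s \<and> real (rk S y - rk S s) * real nC < D"
      proof
        fix y assume y: "y \<in> NS s"
        hence "rk S s < rk S y" using rk_less[OF fS s] unfolding NS_def by auto
        thus "1 \<le> rk S y - rk S s \<and> real (rk S y - rk S s) * real nC < D"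
          using y unfolding NS_def by (simp add: of_nat_diff)
      qed
    qed (use nCpos Dpos in auto)
    have cNC: "real (card (NCc c)) \<le> D / real m" if c: "c \<in> C" for c
    proof (rule card_gap[where g = "\<lambda>c'. rk C c - rk C c'"])
      show "finite (NCc c)" unfolding NCc_def using fC by simp
      show "inj_on (\<lambda>c'. rk C c - rk C c') (NCc c)"
      proof (rule inj_onI)
        fix u v assume uv: "u \<in> NCc c" "v \<in> NCc c" "rk C c - rk C u = rk C c - rk C v"
        have "rk C u < rk C c" "rk C v < rk C c" using uv rk_less[OF fC] unfolding NCc_def by auto
        hence "rk C u = rk C v" using uv(3) by arith
        thus "u = v" using rk_inj[OF fC] uv unfolding NCc_def inj_on_def by auto
      qed
      show "\<forall>y\<in>NCc c. 1 \<le> rk C c - rk C y \<and> real (rk C c - rk C y) * real m < D"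
      proof
        fix y assume y: "y \<in> NCc c"
        hence "rk C y < rk C c" using rk_less[OF fC] unfolding NCc_def by auto
        thus "1 \<le> rk C c - rk C y \<and> real (rk C c - rk C y) * real m < D"
          using y unfolding NCc_def by (simp add: of_nat_diff)
      qed
    qed (use mpos Dpos in auto)
    have fNS: "finite (NS s)" for s unfolding NS_def using fS by simp
    have fNC: "finite (NCc c)" for c unfolding NCc_def using fC by simp
    have "real (card (SIGMA s:S. NS s)) = (\<Sum>s\<in>S. real (card (NS s)))"
      using fS fNS by (simp add: of_nat_sum)
    also have "\<dots> \<le> (\<Sum>s\<in>S. D / real nC)" using cNS by (intro sum_mono) auto
    finally have c1: "real (card (SIGMA s:S. NS s)) \<le> real m * (D / real nC)" unfolding m_def by simp
    have "real (card (SIGMA c:C. NCc c)) = (\<Sum>c\<in>C. real (card (NCc c)))"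
      using fC fNC by (simp add: of_nat_sum)
    also have "\<dots> \<le> (\<Sum>c\<in>C. D / real m)" using cNC by (intro sum_mono) auto
    finally have c2: "real (card (SIGMA c:C. NCc c)) \<le> real nC * (D / real m)" unfolding nC_def by simp
    have Tsub: "T \<subseteq> (\<lambda>((s, s'), (c, c')). (s, s', c, c')) ` ((SIGMA s:S. NS s) \<times> (SIGMA c:C. NCc c))"
    proof
      fix y assume "y \<in> T"
      then obtain s s' c c' where y: "y = (s, s', c, c')" and yT: "(s, s', c, c') \<in> T" by (cases y) auto
      have "((s, s'), (c, c')) \<in> (SIGMA s:S. NS s) \<times> (SIGMA c:C. NCc c)"
        using yT unfolding T_def NS_def NCc_def by auto
      thus "y \<in> (\<lambda>((s, s'), (c, c')). (s, s', c, c')) ` ((SIGMA s:S. NS s) \<times> (SIGMA c:C. NCc c))"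
        unfolding y by force
    qed
    have fSig: "finite ((SIGMA s:S. NS s) \<times> (SIGMA c:C. NCc c))" using fS fC fNS fNC by auto
    have "card T \<le> card ((\<lambda>((s, s'), (c, c')). (s, s', c, c')) ` ((SIGMA s:S. NS s) \<times> (SIGMA c:C. NCc c)))"
      using Tsub fSig by (intro card_mono) auto
    also have "\<dots> \<le> card ((SIGMA s:S. NS s) \<times> (SIGMA c:C. NCc c))" by (rule card_image_le[OF fSig])
    also have "\<dots> = card (SIGMA s:S. NS s) * card (SIGMA c:C. NCc c)" by (rule card_cartesian_product)
    finally have "real (card T) \<le> real (card (SIGMA s:S. NS s)) * real (card (SIGMA c:C. NCc c))"
      by (metis of_nat_le_iff of_nat_mult)
    also have "\<dots> \<le> (real m * (D / real nC)) * (real nC * (D / real m))"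
      using c1 c2 by (intro mult_mono) auto
    also have "\<dots> = D^2" using mpos nCpos by (simp add: field_simps power2_eq_square)
    finally have cT: "real (card T) \<le> D^2" .
    have fT: "finite T"
      by (rule finite_subset[OF Tsub]) (use fSig in simp)
    have "card Q = card (h ` Q)" using card_image[OF injh] by simp
    also have "\<dots> \<le> card T" using hQT fT by (intro card_mono) auto
    finally have "real (card Q) \<le> D^2" using cT by linarith
    hence X: "real (card E) * real (card B) * (\<tau> / 2) \<le> D^2" using lowQ by linarith
    have "real (card E) * real (card B) * \<tau>^3 = (real (card E) * real (card B) * (\<tau> / 2)) * (2 * \<tau>^2)"
      by (simp add: power2_eq_square power3_eq_cube)
    also have "\<dots> \<le> D^2 * (2 * \<tau>^2)" using X t4 by (intro mult_right_mono) auto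
    also have "\<dots> = 128 * real m ^ 2 * real nC ^ 2" unfolding D_def using t4
      by (simp add: field_simps power2_eq_square)
    finally show ?thesis unfolding E_def m_def nC_def S_def .
  qed
qed

lemma main_dec:
  fixes A B C :: "real set" and f :: "real \<Rightarrow> real" and \<tau> :: real
  assumes fA: "finite A" and fB: "finite B" and Bne: "B \<noteq> {}" and fC: "finite C"
    and sc: "strictly_convex f" and mono: "\<forall>a\<in>A. \<forall>a'\<in>A. a < a' \<longrightarrow> f a' < f a"
    and t4: "4 \<le> \<tau>"
  shows "real (card {x \<in> sumset (f ` A) C. \<tau> \<le> real (rep (f ` A) C x)}) * real (card B) * \<tau>^3
         \<le> 128 * real (card (sumset A B))^2 * real (card C)^2"
proof -
  define g where "g t = f (- t)" for t
  have scg: "strictly_convex g" unfolding strictly_convex_def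
  proof (intro allI impI)
    fix x y t :: real assume h: "x \<noteq> y \<and> 0 < t \<and> t < 1"
    have d: "\<And>x y t. x \<noteq> y \<Longrightarrow> 0 < t \<Longrightarrow> t < 1 \<Longrightarrow> f ((1 - t) * x + t * y) < (1 - t) * f x + t * f y"
      using sc unfolding strictly_convex_def by blast
    have "f ((1 - t) * (- x) + t * (- y)) < (1 - t) * f (- x) + t * f (- y)"
      using d[of "- x" "- y" t] h by auto
    moreover have "(1 - t) * (- x) + t * (- y) = - ((1 - t) * x + t * y)" by (simp add: algebra_simps)
    ultimately show "g ((1 - t) * x + t * y) < (1 - t) * g x + t * g y" unfolding g_def by simp
  qed
  have img: "g ` (uminus ` A) = f ` A" unfolding g_def by (simp add: image_image)
  have ss: "sumset (uminus ` A) (uminus ` B) = uminus ` sumset A B"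
  proof (rule set_eqI, rule iffI)
    fix z assume "z \<in> sumset (uminus ` A) (uminus ` B)"
    then obtain a b where "a \<in> A" "b \<in> B" "z = - a + - b" unfolding sumset_def by auto
    thus "z \<in> uminus ` sumset A B" unfolding sumset_def by (intro image_eqI[of _ _ "a + b"]) auto
  next
    fix z assume "z \<in> uminus ` sumset A B"
    then obtain a b where ab: "a \<in> A" "b \<in> B" "z = - (a + b)" unfolding sumset_def by auto
    have "- a \<in> uminus ` A" "- b \<in> uminus ` B" using ab by auto
    moreover have "z = (- a) + (- b)" using ab by simp
    ultimately show "z \<in> sumset (uminus ` A) (uminus ` B)" unfolding sumset_def by blast
  qed
  have cs: "card (uminus ` sumset A B) = card (sumset A B)" by (simp add: card_image)
  have cb: "card (uminus ` B) = card B" by (simp add: card_image)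
  have mg: "\<forall>a\<in>uminus ` A. \<forall>a'\<in>uminus ` A. a < a' \<longrightarrow> g a < g a'"
    using mono unfolding g_def by auto
  have "real (card {x \<in> sumset (g ` (uminus ` A)) C. \<tau> \<le> real (rep (g ` (uminus ` A)) C x)}) * real (card (uminus ` B)) * \<tau>^3
         \<le> 128 * real (card (sumset (uminus ` A) (uminus ` B)))^2 * real (card C)^2"
    using main_inc[OF _ _ _ fC scg mg t4] fA fB Bne by auto
  thus ?thesis unfolding img ss cs cb .
qed

theorem lemma27:
  shows "\<exists>c::real. c > 0 \<and>
    (\<forall>(A::real set) (B::real set) (C::real set) (f::real \<Rightarrow> real) (M::real) (\<tau>::real).
       finite A \<and> A \<noteq> {} \<and> finite B \<and> B \<noteq> {} \<and> finite C \<and> C \<noteq> {} \<and>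
       strictly_convex f \<and> real (card (sumset A B)) \<le> M * real (card B) \<and> \<tau> > 0
       \<longrightarrow> real (card {x \<in> sumset (f ` A) C. real (rep (f ` A) C x) \<ge> \<tau>})
             \<le> c * (M * log 2 (2 * M))\<^sup>2 * real (card B) * real (card C)^2 / \<tau>^3)"
proof (intro exI[of _ 2048] conjI allI impI)
  fix A B C :: "real set" and f :: "real \<Rightarrow> real" and M \<tau> :: real
  assume H: "finite A \<and> A \<noteq> {} \<and> finite B \<and> B \<noteq> {} \<and> finite C \<and> C \<noteq> {} \<and>
       strictly_convex f \<and> real (card (sumset A B)) \<le> M * real (card B) \<and> \<tau> > 0"
  hence fA: "finite A" and Ane: "A \<noteq> {}" and fB: "finite B" and Bne: "B \<noteq> {}" and fC: "finite C"
    and Cne: "C \<noteq> {}" and sc: "strictly_convex f" and hM: "real (card (sumset A B)) \<le> M * real (card B)"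
    and tpos: "\<tau> > 0" by auto
  define S where "S = sumset A B"
  define m where "m = card S"
  define nB where "nB = card B"
  define nC where "nC = card C"
  define E where "E = {x \<in> sumset (f ` A) C. \<tau> \<le> real (rep (f ` A) C x)}"
  define K where "K = (M * log 2 (2 * M))\<^sup>2"
  have fS: "finite S" unfolding S_def using fA fB by (simp add: finite_sumset)
  obtain a0 where a0: "a0 \<in> A" using Ane by auto
  obtain b0 where b0: "b0 \<in> B" using Bne by auto
  have nBpos: "nB > 0" unfolding nB_def using fB Bne by (simp add: card_gt_0_iff)
  have nCpos: "nC > 0" unfolding nC_def using fC Cne by (simp add: card_gt_0_iff)
  have "(\<lambda>b. a0 + b) ` B \<subseteq> S" unfolding S_def sumset_def using a0 by auto
  hence "card ((\<lambda>b. a0 + b) ` B) \<le> m" unfolding m_def using fS by (simp add: card_mono)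
  hence mB: "nB \<le> m" unfolding nB_def by (simp add: card_image)
  have "(\<lambda>a. a + b0) ` A \<subseteq> S" unfolding S_def sumset_def using b0 by auto
  hence "card ((\<lambda>a. a + b0) ` A) \<le> m" unfolding m_def using fS by (simp add: card_mono)
  hence mA: "card A \<le> m" by (simp add: card_image)
  have hM': "real m \<le> M * real nB" using hM unfolding m_def S_def nB_def .
  have M1: "M \<ge> 1"
  proof -
    have "real nB \<le> M * real nB" using mB hM' by linarith
    thus ?thesis using nBpos by simp
  qed
  have L1: "log 2 (2 * M) \<ge> 1"
  proof -
    have "log 2 2 \<le> log 2 (2 * M)" using M1 by (subst log_le_cancel_iff) auto
    thus ?thesis by simp
  qed
  have "M \<le> M * log 2 (2 * M)" using M1 L1 by (simp add: mult_le_cancel_left1)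
  hence "M^2 \<le> K" unfolding K_def using M1 by (intro power_mono) auto
  have KM: "M^2 \<le> K" by fact
  have fE: "finite E" unfolding E_def using fA fC by (simp add: finite_sumset)
  have goal: "real (card E) \<le> 2048 * K * real nB * real nC ^ 2 / \<tau> ^ 3"
  proof (cases "\<tau> < 8")
    case True
    have "card E \<le> card (sumset (f ` A) C)" unfolding E_def using fA fC
      by (intro card_mono) (auto simp: finite_sumset)
    also have "\<dots> \<le> card (f ` A \<times> C)" unfolding sumset_eq by (rule card_image_le) (use fA fC in simp)
    also have "\<dots> = card (f ` A) * nC" unfolding nC_def by (simp add: card_cartesian_product)
    also have "\<dots> \<le> m * nC" using card_image_le[OF fA, of f] mA by (intro mult_right_mono) auto
    finally have "real (card E) \<le> real m * real nC" by (metis of_nat_le_iff of_nat_mult)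
    also have "\<dots> \<le> (M * real nB) * real nC" using hM' by (intro mult_right_mono) auto
    also have "\<dots> \<le> K * real nB * real nC ^ 2"
    proof -
      have "M \<le> M^2" using M1 by (simp add: power2_eq_square)
      hence "M \<le> K" using KM by linarith
      moreover have "real nC \<le> real nC ^ 2" using nCpos by (simp add: power2_eq_square)
      ultimately have "M * (real nB * real nC) \<le> K * (real nB * real nC ^ 2)"
        using M1 by (intro mult_mono) (auto intro: mult_left_mono)
      thus ?thesis by (simp add: algebra_simps)
    qed
    also have "\<dots> \<le> 2048 * K * real nB * real nC ^ 2 / \<tau> ^ 3"
    proof -
      have t3: "\<tau> ^ 3 \<le> 8 ^ 3" using True tpos by (intro power_mono) auto
      have "0 \<le> K" using KM by (metis zero_le_power2 order_trans)
      hence K0: "0 \<le> K * real nB * real nC ^ 2" by simp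
      have "(K * real nB * real nC ^ 2) * \<tau> ^ 3 \<le> (K * real nB * real nC ^ 2) * 2048"
        using t3 K0 by (intro mult_left_mono) auto
      thus ?thesis using tpos by (simp add: pos_le_divide_eq algebra_simps)
    qed
    finally show ?thesis .
  next
    case False
    define A1 where "A1 = {a \<in> A. \<forall>y>a. f a < f y}"
    define A2 where "A2 = A - A1"
    have fA1: "finite A1" unfolding A1_def using fA by simp
    have fA2: "finite A2" unfolding A2_def using fA by simp
    have mono1: "\<forall>a\<in>A1. \<forall>a'\<in>A1. a < a' \<longrightarrow> f a < f a'" unfolding A1_def by auto
    have mono2: "\<forall>a\<in>A2. \<forall>a'\<in>A2. a < a' \<longrightarrow> f a' < f a"
    proof (intro ballI impI)
      fix a a' assume a: "a \<in> A2" and a': "a' \<in> A2" and lt: "a < a'"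
      obtain y where y: "y > a'" "f y \<le> f a'" using a' unfolding A2_def A1_def by auto
      have "f a' * (y - a) < (y - a') * f a + (a' - a) * f y" using sc3[OF sc lt y(1)] .
      also have "\<dots> \<le> (y - a') * f a + (a' - a) * f a'" using y lt by (intro add_left_mono mult_left_mono) auto
      finally have "f a' * (y - a') < (y - a') * f a" by (simp add: algebra_simps)
      thus "f a' < f a" using y by (simp add: mult.commute)
    qed
    have t4: "4 \<le> \<tau> / 2" using False by simp
    define E1 where "E1 = {x \<in> sumset (f ` A1) C. \<tau> / 2 \<le> real (rep (f ` A1) C x)}"
    define E2 where "E2 = {x \<in> sumset (f ` A2) C. \<tau> / 2 \<le> real (rep (f ` A2) C x)}"
    have fE1: "finite E1" unfolding E1_def using fA1 fC by (simp add: finite_sumset)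
    have fE2: "finite E2" unfolding E2_def using fA2 fC by (simp add: finite_sumset)
    have "E \<subseteq> E1 \<union> E2"
    proof
      fix x assume x: "x \<in> E"
      define Z where "Z A' = {(u, v). u \<in> f ` A' \<and> v \<in> C \<and> u + v = x}" for A'
      have fZ: "finite (Z A')" if "finite A'" for A'
        by (rule finite_subset[of _ "f ` A' \<times> C"]) (auto simp: Z_def that fC)
      have "Z A = Z A1 \<union> Z A2" unfolding Z_def A2_def using A1_def by auto
      hence "card (Z A) \<le> card (Z A1) + card (Z A2)" by (simp add: card_Un_le)
      hence "\<tau> \<le> real (card (Z A1)) + real (card (Z A2))"
        using x unfolding E_def rep_def Z_def by simp
      hence "\<tau> / 2 \<le> real (card (Z A1)) \<or> \<tau> / 2 \<le> real (card (Z A2))" by linarith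
      thus "x \<in> E1 \<union> E2"
      proof
        assume h: "\<tau> / 2 \<le> real (card (Z A1))"
        hence "Z A1 \<noteq> {}" using tpos by auto
        then obtain u v where "u \<in> f ` A1" "v \<in> C" "u + v = x" unfolding Z_def by auto
        hence "x \<in> sumset (f ` A1) C" unfolding sumset_def by auto
        thus ?thesis using h unfolding E1_def rep_def Z_def by simp
      next
        assume h: "\<tau> / 2 \<le> real (card (Z A2))"
        hence "Z A2 \<noteq> {}" using tpos by auto
        then obtain u v where "u \<in> f ` A2" "v \<in> C" "u + v = x" unfolding Z_def by auto
        hence "x \<in> sumset (f ` A2) C" unfolding sumset_def by auto
        thus ?thesis using h unfolding E2_def rep_def Z_def by simp
      qed
    qed
    hence cE: "card E \<le> card E1 + card E2"
      by (meson card_Un_le card_mono fE1 fE2 finite_UnI le_trans)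
    have "sumset A1 B \<subseteq> sumset A B" unfolding sumset_def A1_def by auto
    hence m1: "card (sumset A1 B) \<le> m" unfolding m_def S_def
      using card_mono[OF finite_sumset[OF fA fB]] by blast
    have "sumset A2 B \<subseteq> sumset A B" unfolding sumset_def A2_def by auto
    hence m2: "card (sumset A2 B) \<le> m" unfolding m_def S_def
      using card_mono[OF finite_sumset[OF fA fB]] by blast
    have b1: "real (card E1) * real nB * (\<tau> / 2)^3 \<le> 128 * real m ^ 2 * real nC ^ 2"
    proof -
      have "real (card E1) * real nB * (\<tau> / 2)^3 \<le> 128 * real (card (sumset A1 B))^2 * real nC^2"
        using main_inc[OF fA1 fB Bne fC sc mono1 t4] unfolding E1_def nB_def nC_def .
      also have "\<dots> \<le> 128 * real m ^ 2 * real nC ^ 2" using m1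
        by (intro mult_right_mono mult_left_mono power_mono) auto
      finally show ?thesis .
    qed
    have b2: "real (card E2) * real nB * (\<tau> / 2)^3 \<le> 128 * real m ^ 2 * real nC ^ 2"
    proof -
      have "real (card E2) * real nB * (\<tau> / 2)^3 \<le> 128 * real (card (sumset A2 B))^2 * real nC^2"
        using main_dec[OF fA2 fB Bne fC sc mono2 t4] unfolding E2_def nB_def nC_def .
      also have "\<dots> \<le> 128 * real m ^ 2 * real nC ^ 2" using m2
        by (intro mult_right_mono mult_left_mono power_mono) auto
      finally show ?thesis .
    qed
    have "real (card E) * real nB * \<tau>^3 \<le> (real (card E1) + real (card E2)) * real nB * \<tau>^3"
      using cE tpos by (intro mult_right_mono) auto
    also have "\<dots> = 8 * (real (card E1) * real nB * (\<tau> / 2)^3 + real (card E2) * real nB * (\<tau> / 2)^3)"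
      by (simp add: algebra_simps power3_eq_cube)
    also have "\<dots> \<le> 2048 * real m ^ 2 * real nC ^ 2"
    proof -
      have l: "\<And>x y Z::real. x \<le> 128 * Z \<Longrightarrow> y \<le> 128 * Z \<Longrightarrow> 8 * (x + y) \<le> 2048 * Z" by (simp add: distrib_left)
      show ?thesis using l[of _ "real m ^ 2 * real nC ^ 2", OF b1[unfolded mult.assoc] b2[unfolded mult.assoc]]
        by (simp add: mult.assoc)
    qed
    also have "\<dots> \<le> 2048 * (M * real nB) ^ 2 * real nC ^ 2" using hM'
      by (intro mult_right_mono mult_left_mono power_mono) auto
    also have "\<dots> \<le> 2048 * (K * real nB * real nC ^ 2) * real nB"
    proof -
      have e1: "(M * real nB) ^ 2 * real nC ^ 2 = M^2 * (real nB ^ 2 * real nC ^ 2)" by (simp add: power_mult_distrib)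
      have e2: "K * real nB * real nC ^ 2 * real nB = K * (real nB ^ 2 * real nC ^ 2)" by (simp add: power2_eq_square)
      have "M^2 * (real nB ^ 2 * real nC ^ 2) \<le> K * (real nB ^ 2 * real nC ^ 2)" by (rule mult_right_mono[OF KM]) simp
      thus ?thesis unfolding mult.assoc[of 2048] e1 e2 by simp
    qed
    finally have X: "real (card E) * real nB * \<tau>^3 \<le> 2048 * (K * real nB * real nC ^ 2) * real nB" .
    have "real (card E) * \<tau>^3 \<le> 2048 * K * real nB * real nC ^ 2"
    proof -
      have "(real (card E) * \<tau>^3) * real nB \<le> (2048 * K * real nB * real nC ^ 2) * real nB"
        using X by (simp add: algebra_simps)
      thus ?thesis using nBpos by (simp only: mult_le_cancel_right)
    qed
    thus ?thesis using tpos by (simp add: pos_le_divide_eq)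
  qed
  show "real (card {x \<in> sumset (f ` A) C. real (rep (f ` A) C x) \<ge> \<tau>})
             \<le> 2048 * (M * log 2 (2 * M))\<^sup>2 * real (card B) * real (card C)^2 / \<tau>^3"
    using goal unfolding E_def K_def nB_def nC_def .
qed simp

end
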